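(* Let $X$ be a complex Banach space. Suppose that for every normalized weakly null sequence $(y_n)$ in $X$ there exist a subsequence $(y_{n_k})$ and a sequence $(f_k)$ in $X^*$ biorthogonal to it (i.e. $f_k(y_{n_j})=\delta_{kj}$) such that $(f_k)$ has an (unconditional) spreading model satisfying an upper $p$-estimate for some $p>1$. Then $X$ is $\mathcal{P}$-Schur. If moreover the same $p>1$ works for every such sequence and $N>p'=p/(p-1)$ is an integer, then $X$ is $\mathcal{P}_N$-Schur.
   Context: An $N$-homogeneous analytic polynomial on $X$ is the restriction to the diagonal of a bounded $N$-linear form on $X^N$; $\mathcal{P}_N(X)$ denotes the space of these. $X$ is $\mathcal{P}_N$-Schur if $P(x_n)\to0$ for all $P\in\mathcal{P}_N(X)$ implies $\|x_n\|\to0$; $X$ is $\mathcal{P}$-Schur if $P(x_n)\to 0$ for all $P\in\mathcal{P}_M(X)$ and all $M\ge1$ implies $\|x_n\|\to0$. A sequence $(f_k)$ in a Banach space has a spreading model given by a norm $L$ on the space of finitely supported scalar sequences if for every $\varepsilon>0$ and every finitely supported $a=(a_1,\dots,a_M)$ there is $k$ such that $\left|\,\|\sum_{i=1}^M a_i f_{k_i}\|-L(a)\right|<\varepsilon$ for all $k<k_1<\cdots<k_M$; the spreading model is the completion $F$ of this space under $L$, with unit vectors $e_i$. It is unconditional if $(e_i)$ is an unconditional basis of $F$, and satisfies an upper $p$-estimate if there is $C$ with $L(a)\le C(\sum_i|a_i|^p)^{1/p}$ for all finitely supported $a$. *)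

theory Defs
  imports "HOL-Analysis.Analysis"
begin

class scaleC =
  fixes scaleC :: "complex \<Rightarrow> 'a \<Rightarrow> 'a" (infixr \<open>*\<^sub>C\<close> 75)

class complex_normed_vector = scaleC + real_normed_vector +
  assumes scaleC_add_right: "c *\<^sub>C (x + y) = c *\<^sub>C x + c *\<^sub>C y"
    and scaleC_add_left: "(c + d) *\<^sub>C x = c *\<^sub>C x + d *\<^sub>C x"
    and scaleC_scaleC: "c *\<^sub>C d *\<^sub>C x = (c * d) *\<^sub>C x"
    and scaleC_one: "1 *\<^sub>C x = x"
    and scaleR_scaleC: "r *\<^sub>R x = complex_of_real r *\<^sub>C x"
    and norm_scaleC: "norm (c *\<^sub>C x) = norm c * norm x"

definition cdual :: "('a::complex_normed_vector \<Rightarrow> complex) \<Rightarrow> bool" where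
  "cdual f \<longleftrightarrow> (\<forall>x y. f (x + y) = f x + f y) \<and> (\<forall>c x. f (c *\<^sub>C x) = c * f x)
     \<and> (\<exists>K. \<forall>x. norm (f x) \<le> K * norm x)"

definition dual_norm :: "('a::complex_normed_vector \<Rightarrow> complex) \<Rightarrow> real" where
  "dual_norm f = Sup ((\<lambda>x. norm (f x)) ` {x. norm x \<le> 1})"

definition weakly_null :: "(nat \<Rightarrow> 'a::complex_normed_vector) \<Rightarrow> bool" where
  "weakly_null y \<longleftrightarrow> (\<forall>f. cdual f \<longrightarrow> (\<lambda>n. f (y n)) \<longlonglongrightarrow> 0)"

definition normalized :: "(nat \<Rightarrow> 'a::complex_normed_vector) \<Rightarrow> bool" where
  "normalized y \<longleftrightarrow> (\<forall>n. norm (y n) = 1)"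

text \<open>Bounded N-linear forms on X^N, with arguments v 0, ..., v (N-1)
  (the form ignores the coordinates i >= N).\<close>
definition multilinear_form :: "nat \<Rightarrow> ((nat \<Rightarrow> 'a::complex_normed_vector) \<Rightarrow> complex) \<Rightarrow> bool" where
  "multilinear_form N A \<longleftrightarrow>
     (\<forall>v w. (\<forall>i<N. v i = w i) \<longrightarrow> A v = A w) \<and>
     (\<forall>i<N. \<forall>v x z. A (v(i := x + z)) = A (v(i := x)) + A (v(i := z))) \<and>
     (\<forall>i<N. \<forall>v c x. A (v(i := c *\<^sub>C x)) = c * A (v(i := x))) \<and>
     (\<exists>C. \<forall>v. norm (A v) \<le> C * (\<Prod>i<N. norm (v i)))"

definition hom_poly :: "nat \<Rightarrow> ('a::complex_normed_vector \<Rightarrow> complex) \<Rightarrow> bool" where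
  "hom_poly N P \<longleftrightarrow> (\<exists>A. multilinear_form N A \<and> (\<forall>x. P x = A (\<lambda>_. x)))"

definition P_N_Schur :: "'a::complex_normed_vector itself \<Rightarrow> nat \<Rightarrow> bool" where
  "P_N_Schur _ N \<longleftrightarrow> (\<forall>x::nat \<Rightarrow> 'a.
     (\<forall>P. hom_poly N P \<longrightarrow> (\<lambda>n. P (x n)) \<longlonglongrightarrow> 0) \<longrightarrow> (\<lambda>n. norm (x n)) \<longlonglongrightarrow> 0)"

definition P_Schur :: "'a::complex_normed_vector itself \<Rightarrow> bool" where
  "P_Schur _ \<longleftrightarrow> (\<forall>x::nat \<Rightarrow> 'a.
     (\<forall>M\<ge>1. \<forall>P. hom_poly M P \<longrightarrow> (\<lambda>n. P (x n)) \<longlonglongrightarrow> 0) \<longrightarrow> (\<lambda>n. norm (x n)) \<longlonglongrightarrow> 0)"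

definition fin_supp :: "(nat \<Rightarrow> complex) \<Rightarrow> bool" where
  "fin_supp a \<longleftrightarrow> finite {i. a i \<noteq> 0}"

definition is_norm_c00 :: "((nat \<Rightarrow> complex) \<Rightarrow> real) \<Rightarrow> bool" where
  "is_norm_c00 L \<longleftrightarrow>
     (\<forall>a. fin_supp a \<longrightarrow> (L a = 0 \<longleftrightarrow> a = (\<lambda>_. 0))) \<and>
     (\<forall>a c. fin_supp a \<longrightarrow> L (\<lambda>i. c * a i) = norm c * L a) \<and>
     (\<forall>a b. fin_supp a \<longrightarrow> fin_supp b \<longrightarrow> L (\<lambda>i. a i + b i) \<le> L a + L b)"

text \<open>(f_k) in X* has the spreading model given by the norm L (unit vectors e_0, e_1, ...):
  for every eps > 0 and every a = (a_0,...,a_(M-1)) there is k0 such that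
  | || sum_i a_i f_(k_i) || - L(a) | < eps whenever k0 < k_0 < k_1 < ... .\<close>
definition spreading_model :: "(nat \<Rightarrow> ('a::complex_normed_vector \<Rightarrow> complex)) \<Rightarrow> ((nat \<Rightarrow> complex) \<Rightarrow> real) \<Rightarrow> bool" where
  "spreading_model f L \<longleftrightarrow> is_norm_c00 L \<and>
     (\<forall>\<epsilon>>0. \<forall>M. \<forall>a::nat \<Rightarrow> complex. \<exists>k0. \<forall>ks::nat \<Rightarrow> nat. strict_mono ks \<and> k0 < ks 0 \<longrightarrow>
        \<bar>dual_norm (\<lambda>x. \<Sum>i<M. a i * f (ks i) x) - L (\<lambda>i. if i < M then a i else 0)\<bar> < \<epsilon>)"

definition unconditional_sm :: "((nat \<Rightarrow> complex) \<Rightarrow> real) \<Rightarrow> bool" where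
  "unconditional_sm L \<longleftrightarrow> (\<exists>K. \<forall>a \<sigma>. fin_supp a \<longrightarrow> (\<forall>i. \<sigma> i \<in> {-1, 1::complex}) \<longrightarrow>
      L (\<lambda>i. \<sigma> i * a i) \<le> K * L a)"

definition upper_p_estimate :: "((nat \<Rightarrow> complex) \<Rightarrow> real) \<Rightarrow> real \<Rightarrow> bool" where
  "upper_p_estimate L p \<longleftrightarrow> (\<exists>C. \<forall>a. fin_supp a \<longrightarrow>
      L a \<le> C * (\<Sum>i\<in>{i. a i \<noteq> 0}. norm (a i) powr p) powr (1 / p))"

definition biorth_sm_cond :: "real \<Rightarrow> (nat \<Rightarrow> 'a::complex_normed_vector) \<Rightarrow> bool" where
  "biorth_sm_cond p y \<longleftrightarrow> (\<exists>r f L. strict_mono r \<and> (\<forall>k. cdual (f k)) \<and>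
      (\<forall>k j. f k (y (r j)) = (if k = j then 1 else 0)) \<and>
      spreading_model f L \<and> unconditional_sm L \<and> upper_p_estimate L p)"

end

theory Submission
  imports Defs
begin

lemma cdual_zero: "cdual f \<Longrightarrow> f 0 = 0"
  unfolding cdual_def by (metis add_0 add_cancel_right_left)

lemma cdual_scaleR: "cdual f \<Longrightarrow> f (r *\<^sub>R x) = complex_of_real r * f x"
  unfolding cdual_def by (simp add: scaleR_scaleC)

lemma cdual_bound: assumes "cdual f" shows "\<exists>K\<ge>0. \<forall>x. norm (f x) \<le> K * norm x"
proof -
  obtain K where K: "\<forall>x. norm (f x) \<le> K * norm x" using assms unfolding cdual_def by blast
  have "\<forall>x. norm (f x) \<le> max K 0 * norm x"
    by (metis K max.cobounded1 mult_right_mono norm_ge_zero order_trans)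
  then show ?thesis by (intro exI[of _ "max K 0"]) auto
qed

lemma dual_norm_le: assumes "cdual f" shows "norm (f x) \<le> dual_norm f * norm x"
proof (cases "x = 0")
  case True then show ?thesis using cdual_zero[OF assms] by simp
next
  case False
  obtain K where K: "K \<ge> 0" "\<forall>x. norm (f x) \<le> K * norm x" using cdual_bound[OF assms] by blast
  have bdd: "bdd_above ((\<lambda>x. norm (f x)) ` {x. norm x \<le> 1})"
    unfolding bdd_above_def using K by (intro exI[of _ K]) (auto intro: order_trans mult_left_le)
  define u where "u = (1 / norm x) *\<^sub>R x"
  have nu: "norm u \<le> 1" using False by (simp add: u_def)
  have "norm (f u) \<le> dual_norm f" unfolding dual_norm_def
    using nu bdd by (intro cSup_upper) auto
  moreover have "f u = complex_of_real (1 / norm x) * f x" unfolding u_def using cdual_scaleR[OF assms] by simp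
  ultimately have "norm (f x) / norm x \<le> dual_norm f" by (simp add: norm_divide)
  then show ?thesis using False by (simp add: divide_le_eq mult.commute)
qed

lemma cdual_sum: assumes "finite S" "\<And>i. i \<in> S \<Longrightarrow> cdual (g i)"
  shows "cdual (\<lambda>x. \<Sum>i\<in>S. c i * g i x)"
  using assms
proof (induction S rule: finite_induct)
  case empty then show ?case unfolding cdual_def by (simp add: exI[of _ 0])
next
  case (insert a S)
  have IH: "cdual (\<lambda>x. \<Sum>i\<in>S. c i * g i x)" using insert by auto
  have ga: "cdual (g a)" using insert by auto
  obtain K1 where K1: "\<forall>x. norm (\<Sum>i\<in>S. c i * g i x) \<le> K1 * norm x" using IH unfolding cdual_def by blast
  obtain K2 where K2: "\<forall>x. norm (g a x) \<le> K2 * norm x" using ga unfolding cdual_def by blast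
  have "\<forall>x. norm (c a * g a x + (\<Sum>i\<in>S. c i * g i x)) \<le> (norm (c a) * K2 + K1) * norm x"
  proof
    fix x
    have "norm (c a * g a x + (\<Sum>i\<in>S. c i * g i x)) \<le> norm (c a) * norm (g a x) + norm (\<Sum>i\<in>S. c i * g i x)"
      by (metis norm_mult norm_triangle_ineq)
    also have "\<dots> \<le> norm (c a) * (K2 * norm x) + K1 * norm x"
      using K1 K2 by (intro add_mono mult_left_mono) auto
    finally show "norm (c a * g a x + (\<Sum>i\<in>S. c i * g i x)) \<le> (norm (c a) * K2 + K1) * norm x"
      by (simp add: algebra_simps)
  qed
  then have bd: "\<exists>K. \<forall>x. norm (\<Sum>i\<in>insert a S. c i * g i x) \<le> K * norm x"
    using insert(1,2) by auto
  have ad: "\<forall>x y. (\<Sum>i\<in>insert a S. c i * g i (x + y)) = (\<Sum>i\<in>insert a S. c i * g i x) + (\<Sum>i\<in>insert a S. c i * g i y)"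
    using IH ga insert(1,2) unfolding cdual_def by (auto simp: algebra_simps sum.distrib)
  have hm: "\<forall>d x. (\<Sum>i\<in>insert a S. c i * g i (d *\<^sub>C x)) = d * (\<Sum>i\<in>insert a S. c i * g i x)"
    using IH ga insert(1,2) unfolding cdual_def by (auto simp: algebra_simps sum_distrib_left)
  show ?case using bd ad hm unfolding cdual_def by blast
qed

lemma prod_le_sum_pow:
  fixes a :: "nat \<Rightarrow> real"
  assumes "N \<ge> 1" "\<And>i. a i \<ge> 0"
  shows "(\<Prod>i<N. a i) \<le> (\<Sum>j<N. a j ^ N)"
proof -
  define M where "M = Max (a ` {..<N})"
  have ne: "a ` {..<N} \<noteq> {}" using assms(1) by (auto simp: lessThan_empty_iff)
  have aM: "\<And>i. i < N \<Longrightarrow> a i \<le> M" unfolding M_def by (intro Max_ge) auto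
  have "M \<in> a ` {..<N}" unfolding M_def using ne by (intro Max_in) auto
  then obtain j0 where j0: "j0 < N" "M = a j0" by auto
  have "(\<Prod>i<N. a i) \<le> (\<Prod>i<N. M)"
    using aM assms(2) by (intro prod_mono) auto
  also have "\<dots> = a j0 ^ N" using j0 by simp
  also have "\<dots> \<le> (\<Sum>j<N. a j ^ N)"
    using j0 assms(2) by (intro member_le_sum) auto
  finally show ?thesis .
qed

lemma prod_split_at:
  fixes h :: "nat \<Rightarrow> complex"
  assumes "i < N"
  shows "(\<Prod>j<N. h j) = h i * (\<Prod>j\<in>{..<N} - {i}. h j)"
  using assms by (simp add: prod.remove)

lemma multilinear_series:
  fixes g :: "nat \<Rightarrow> 'a::complex_normed_vector \<Rightarrow> complex"
  assumes g: "\<And>k. cdual (g k)"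
    and summ: "\<And>x. summable (\<lambda>k. norm (g k x) ^ N)"
    and bnd: "\<And>x. (\<Sum>k. norm (g k x) ^ N) \<le> D * norm x ^ N"
    and N: "N \<ge> 1"
  shows "multilinear_form N (\<lambda>v. \<Sum>k. \<Prod>i<N. g k (v i))"
proof -
  define T where "T k v = (\<Prod>i<N. g k (v i))" for k v
  have normT: "norm (T k v) \<le> (\<Sum>j<N. norm (g k (v j)) ^ N)" for k v
    unfolding T_def prod_norm[symmetric] using prod_le_sum_pow[OF N] by simp
  have sumnT: "summable (\<lambda>k. norm (T k v))" for v
  proof (rule summable_comparison_test)
    show "\<exists>M. \<forall>n\<ge>M. norm (norm (T n v)) \<le> (\<Sum>j<N. norm (g n (v j)) ^ N)"
      using normT by auto
    show "summable (\<lambda>n. \<Sum>j<N. norm (g n (v j)) ^ N)"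
      using summ by (intro summable_sum) auto
  qed
  have sumT: "summable (\<lambda>k. T k v)" for v using sumnT by (rule summable_norm_cancel)
  have p1: "\<forall>v w. (\<forall>i<N. v i = w i) \<longrightarrow> (\<Sum>k. T k v) = (\<Sum>k. T k w)"
    unfolding T_def by auto
  have p2: "\<forall>i<N. \<forall>v x z. (\<Sum>k. T k (v(i := x + z))) = (\<Sum>k. T k (v(i := x))) + (\<Sum>k. T k (v(i := z)))"
  proof (intro allI impI)
    fix i v x z assume i: "i < N"
    have "T k (v(i := x + z)) = T k (v(i := x)) + T k (v(i := z))" for k
    proof -
      have e: "(\<Prod>j\<in>{..<N} - {i}. g k ((v(i := w)) j)) = (\<Prod>j\<in>{..<N} - {i}. g k (v j))" for w
        by (intro prod.cong) auto
      have ad: "g k (x + z) = g k x + g k z" using g unfolding cdual_def by blast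
      show ?thesis unfolding T_def
        using prod_split_at[OF i, of "\<lambda>j. g k ((v(i := _)) j)"] e ad
        by (simp add: prod_split_at[OF i] distrib_right)
    qed
    then show "(\<Sum>k. T k (v(i := x + z))) = (\<Sum>k. T k (v(i := x))) + (\<Sum>k. T k (v(i := z)))"
      using suminf_add[OF sumT sumT] by simp
  qed
  have p3: "\<forall>i<N. \<forall>v c x. (\<Sum>k. T k (v(i := c *\<^sub>C x))) = c * (\<Sum>k. T k (v(i := x)))"
  proof (intro allI impI)
    fix i v c x assume i: "i < N"
    have "T k (v(i := c *\<^sub>C x)) = c * T k (v(i := x))" for k
    proof -
      have e: "(\<Prod>j\<in>{..<N} - {i}. g k ((v(i := w)) j)) = (\<Prod>j\<in>{..<N} - {i}. g k (v j))" for w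
        by (intro prod.cong) auto
      have hm: "g k (c *\<^sub>C x) = c * g k x" using g unfolding cdual_def by blast
      show ?thesis unfolding T_def
        using e hm by (simp add: prod_split_at[OF i])
    qed
    then show "(\<Sum>k. T k (v(i := c *\<^sub>C x))) = c * (\<Sum>k. T k (v(i := x)))"
      using suminf_mult[OF sumT, of c] by simp
  qed
  have p4: "\<forall>v. norm (\<Sum>k. T k v) \<le> (of_nat N * max D 0) * (\<Prod>i<N. norm (v i))"
  proof
    fix v
    show "norm (\<Sum>k. T k v) \<le> (of_nat N * max D 0) * (\<Prod>i<N. norm (v i))"
    proof (cases "\<exists>i<N. v i = 0")
      case True
      then obtain i where i: "i < N" "v i = 0" by auto
      have "T k v = 0" for k unfolding T_def
        using i cdual_zero[OF g] by (intro prod_zero) (auto intro!: bexI[of _ i])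
      then show ?thesis by (simp add: prod_nonneg)
    next
      case False
      define u where "u i = (1 / norm (v i)) *\<^sub>R v i" for i
      have vu: "v i = norm (v i) *\<^sub>R u i" if "i < N" for i
        using False that unfolding u_def by auto
      have nu: "norm (u i) = 1" if "i < N" for i
        using False that unfolding u_def by auto
      define Q where "Q = (\<Prod>i<N. norm (v i))"
      have Q0: "Q \<ge> 0" unfolding Q_def by (intro prod_nonneg) auto
      have Tvu: "norm (T k v) = Q * norm (T k u)" for k
      proof -
        have "T k v = (\<Prod>i<N. complex_of_real (norm (v i)) * g k (u i))" unfolding T_def
          using vu cdual_scaleR[OF g] by (intro prod.cong) (auto, metis)
        then show ?thesis unfolding T_def Q_def by (simp add: prod.distrib prod_norm[symmetric] norm_mult)
      qed
      have su: "summable (\<lambda>k. \<Sum>j<N. norm (g k (u j)) ^ N)"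
        using summ by (intro summable_sum) auto
      have "norm (\<Sum>k. T k v) \<le> (\<Sum>k. norm (T k v))" by (rule summable_norm[OF sumnT])
      also have "\<dots> \<le> (\<Sum>k. Q * (\<Sum>j<N. norm (g k (u j)) ^ N))"
        using Tvu normT Q0 su by (intro suminf_le sumnT summable_mult) (auto intro: mult_left_mono)
      also have "\<dots> = Q * (\<Sum>j<N. \<Sum>k. norm (g k (u j)) ^ N)"
        using su summ by (simp add: suminf_mult suminf_sum)
      also have "\<dots> \<le> Q * (\<Sum>j<N. max D 0)"
      proof (intro mult_left_mono Q0 sum_mono)
        fix j assume "j \<in> {..<N}"
        then show "(\<Sum>k. norm (g k (u j)) ^ N) \<le> max D 0" using bnd[of "u j"] nu by auto
      qed
      finally show ?thesis unfolding Q_def by (simp add: mult.commute)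
    qed
  qed
  show ?thesis unfolding multilinear_form_def T_def[symmetric]
    using p1 p2 p3 p4 by blast
qed

lemma hom_poly_pow:
  fixes f :: "'a::complex_normed_vector \<Rightarrow> complex"
  assumes f: "cdual f" and N: "N \<ge> 1"
  shows "hom_poly N (\<lambda>x. f x ^ N)"
proof -
  define g where "g k = (if k = 0 then f else (\<lambda>_. 0))" for k :: nat
  have gc: "cdual (g k)" for k
    using f unfolding g_def cdual_def by (auto intro: exI[of _ 0])
  obtain K where K: "K \<ge> 0" "\<forall>x. norm (f x) \<le> K * norm x" using cdual_bound[OF f] by blast
  have e: "norm (g k x) ^ N = (if k = 0 then norm (f x) ^ N else 0)" for k x
    using N unfolding g_def by auto
  have sm: "summable (\<lambda>k. norm (g k x) ^ N)" for x
    unfolding e by (rule summable_finite[of "{0}"]) auto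
  have sv: "(\<Sum>k. norm (g k x) ^ N) = norm (f x) ^ N" for x
    unfolding e using sums_single[of 0 "\<lambda>_. norm (f x) ^ N"] sums_unique by (metis (no_types))
  have bd: "(\<Sum>k. norm (g k x) ^ N) \<le> K ^ N * norm x ^ N" for x
    unfolding sv power_mult_distrib[symmetric] using K by (intro power_mono) auto
  have ml: "multilinear_form N (\<lambda>v. \<Sum>k. \<Prod>i<N. g k (v i))"
    by (rule multilinear_series[OF gc sm bd N])
  have e2: "(\<Prod>i<N. g k x) = (if k = 0 then f x ^ N else 0)" for k x
    using N unfolding g_def by auto
  have "(\<Sum>k. \<Prod>i<N. g k ((\<lambda>_. x) i)) = f x ^ N" for x
    unfolding e2 using sums_single[of 0 "\<lambda>_. f x ^ N"] sums_unique by (metis (no_types))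
  then show ?thesis unfolding hom_poly_def using ml by (intro exI[of _ "\<lambda>v. \<Sum>k. \<Prod>i<N. g k (v i)"]) auto
qed

lemma weakly_null_from_poly:
  fixes x :: "nat \<Rightarrow> 'a::complex_normed_vector"
  assumes N: "N \<ge> 1" and h: "\<forall>P. hom_poly N P \<longrightarrow> (\<lambda>n. P (x n)) \<longlonglongrightarrow> 0"
    and f: "cdual f"
  shows "(\<lambda>n. f (x n)) \<longlonglongrightarrow> 0"
proof -
  have "(\<lambda>n. f (x n) ^ N) \<longlonglongrightarrow> 0" using h hom_poly_pow[OF f N] by blast
  then have "(\<lambda>n. norm (f (x n) ^ N)) \<longlonglongrightarrow> 0" by (rule tendsto_norm_zero)
  then have "(\<lambda>n. root N (norm (f (x n)) ^ N)) \<longlonglongrightarrow> root N 0"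
    by (intro tendsto_real_root) (simp add: norm_power)
  then have "(\<lambda>n. norm (f (x n))) \<longlonglongrightarrow> 0" using N by (simp add: real_root_power_cancel)
  then show ?thesis by (rule tendsto_norm_zero_cancel)
qed

lemma L_const_bound:
  assumes C: "\<And>a. fin_supp a \<Longrightarrow> L a \<le> C * (\<Sum>i\<in>{i. a i \<noteq> 0}. norm (a i) powr p) powr (1 / p)"
    and c: "norm c = 1"
  shows "L (\<lambda>i. if i < m then c else 0) \<le> \<bar>C\<bar> * real m powr (1 / p)"
proof -
  have c0: "c \<noteq> 0" using c by auto
  have S: "{i. (if i < m then c else 0) \<noteq> 0} = {..<m}" using c0 by auto
  have fs: "fin_supp (\<lambda>i. if i < m then c else 0)" unfolding fin_supp_def S by simp
  have "L (\<lambda>i. if i < m then c else 0) \<le> C * (\<Sum>i\<in>{..<m}. norm (if i < m then c else 0) powr p) powr (1 / p)"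
    using C[OF fs] unfolding S .
  also have "(\<Sum>i\<in>{..<m}. norm (if i < m then c else 0) powr p) = real m"
    using c by simp
  also have "C * real m powr (1 / p) \<le> \<bar>C\<bar> * real m powr (1 / p)"
    by (intro mult_right_mono) auto
  finally show ?thesis .
qed

lemma enum_ext_strict_mono:
  fixes G :: "nat set"
  assumes G: "finite G"
  defines "e \<equiv> (\<lambda>i. if i < card G then enumerate G i else Max G + 1 + i)"
  shows "strict_mono e"
proof (rule strict_monoI)
  fix i j :: nat assume ij: "i < j"
  show "e i < e j"
  proof (cases "j < card G")
    case True
    then show ?thesis unfolding e_def using ij G by (simp add: finite_enumerate_mono)
  next
    case False
    show ?thesis
    proof (cases "i < card G")
      case True
      have "enumerate G i \<in> G" by (rule finite_enumerate_in_set[OF G True])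
      then have "enumerate G i \<le> Max G" using G by simp
      then show ?thesis unfolding e_def using True False by simp
    next
      case False
      then show ?thesis unfolding e_def using ij \<open>\<not> j < card G\<close> by simp
    qed
  qed
qed

context
  fixes f :: "nat \<Rightarrow> 'a::complex_normed_vector \<Rightarrow> complex" and L :: "(nat \<Rightarrow> complex) \<Rightarrow> real"
    and p C :: real and k0 :: "complex \<Rightarrow> nat \<Rightarrow> nat" and s :: "nat \<Rightarrow> nat"
  assumes fc: "\<And>k. cdual (f k)"
    and p: "p > 1"
    and C: "\<And>a. fin_supp a \<Longrightarrow> L a \<le> C * (\<Sum>i\<in>{i. a i \<noteq> 0}. norm (a i) powr p) powr (1 / p)"
    and k0: "\<And>c m ks. c \<in> {1, -1, \<i>, -\<i>} \<Longrightarrow> strict_mono ks \<Longrightarrow> k0 c m < ks 0 \<Longrightarrow>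
        \<bar>dual_norm (\<lambda>x. \<Sum>i<m. c * f (ks i) x) - L (\<lambda>i. if i < m then c else 0)\<bar> < 1"
    and s: "strict_mono s" "\<And>c m j. c \<in> {1, -1, \<i>, -\<i>} \<Longrightarrow> m \<le> 2 * j + 1 \<Longrightarrow> k0 c m < s j"
begin

lemma tail_bound:
  assumes c: "c \<in> {1, -1, \<i>, -\<i>}" and G: "finite G" "G \<noteq> {}"
    and h: "\<And>k. k \<in> G \<Longrightarrow> h \<le> k" and cG: "card G \<le> 2 * h + 1"
  shows "dual_norm (\<lambda>x. \<Sum>k\<in>G. c * f (s k) x) \<le> \<bar>C\<bar> * real (card G) powr (1 / p) + 1"
proof -
  define m where "m = card G"
  define e where "e = (\<lambda>i. if i < card G then enumerate G i else Max G + 1 + i)"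
  have em: "strict_mono e" unfolding e_def by (rule enum_ext_strict_mono[OF G(1)])
  have ks: "strict_mono (s \<circ> e)" using em s(1) by (simp add: strict_mono_def)
  have m0: "0 < m" using G unfolding m_def by auto
  have e0: "e 0 \<in> G" unfolding e_def using m0 m_def G(1) by (simp add: finite_enumerate_in_set)
  have "m \<le> 2 * e 0 + 1" using h[OF e0] cG unfolding m_def by linarith
  then have lt: "k0 c m < (s \<circ> e) 0" using s(2)[OF c] by simp
  have bij: "bij_betw e {..<m} G"
  proof -
    have "bij_betw (enumerate G) {..<m} G" unfolding m_def by (rule finite_bij_enumerate[OF G(1)])
    moreover have "\<And>i. i \<in> {..<m} \<Longrightarrow> e i = enumerate G i" unfolding e_def m_def by simp
    ultimately show ?thesis by (metis bij_betw_cong)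
  qed
  have eqs: "(\<lambda>x. \<Sum>i<m. c * f ((s \<circ> e) i) x) = (\<lambda>x. \<Sum>k\<in>G. c * f (s k) x)"
  proof
    fix x
    show "(\<Sum>i<m. c * f ((s \<circ> e) i) x) = (\<Sum>k\<in>G. c * f (s k) x)"
      using sum.reindex_bij_betw[OF bij, of "\<lambda>k. c * f (s k) x"] by simp
  qed
  have "\<bar>dual_norm (\<lambda>x. \<Sum>i<m. c * f ((s \<circ> e) i) x) - L (\<lambda>i. if i < m then c else 0)\<bar> < 1"
    by (rule k0[OF c ks lt])
  moreover have "L (\<lambda>i. if i < m then c else 0) \<le> \<bar>C\<bar> * real m powr (1 / p)"
    using c by (intro L_const_bound[OF C]) auto
  moreover have "dual_norm (\<lambda>x. \<Sum>i<m. c * f ((s \<circ> e) i) x) = dual_norm (\<lambda>x. \<Sum>k\<in>G. c * f (s k) x)"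
    using eqs by simp
  ultimately show ?thesis unfolding m_def by linarith
qed

lemma count_quadrant:
  assumes c: "c \<in> {1, -1, \<i>, -\<i>}" and G: "finite G" and v: "v > 0"
    and Gv: "\<And>k. k \<in> G \<Longrightarrow> v / 2 \<le> Re (c * f (s k) x)"
  shows "real (card G) * v \<le> 4 * (\<bar>C\<bar> + 1) * real (card G) powr (1 / p) * norm x"
proof (cases "G = {}")
  case True then show ?thesis by simp
next
  case False
  define g where "g = card G"
  define h where "h = g div 2"
  define G' where "G' = {k\<in>G. h \<le> k}"
  have fG': "finite G'" using G unfolding G'_def by simp
  have sub: "G \<subseteq> G' \<union> (G \<inter> {..<h})" unfolding G'_def by auto
  have "g \<le> card (G' \<union> (G \<inter> {..<h}))" unfolding g_def using sub fG' by (intro card_mono) auto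
  also have "\<dots> \<le> card G' + card (G \<inter> {..<h})" by (rule card_Un_le)
  also have "card (G \<inter> {..<h}) \<le> h" by (metis card_lessThan card_mono finite_lessThan inf_le2)
  finally have g1: "g \<le> card G' + h" by simp
  have g0: "g \<ge> 1" unfolding g_def using False G by (simp add: Suc_le_eq card_gt_0_iff)
  have g2: "g \<le> 2 * card G'" using g1 unfolding h_def by linarith
  have G'ne: "G' \<noteq> {}" using g2 g0 by auto
  have cG'g: "card G' \<le> g" unfolding g_def G'_def using G by (intro card_mono) auto
  have tb: "dual_norm (\<lambda>x. \<Sum>k\<in>G'. c * f (s k) x) \<le> \<bar>C\<bar> * real (card G') powr (1 / p) + 1"
    by (rule tail_bound[OF c fG' G'ne, of h]) (use cG'g in \<open>auto simp: G'_def h_def\<close>)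
  define \<phi> where "\<phi> = (\<lambda>x. \<Sum>k\<in>G'. c * f (s k) x)"
  have cphi: "cdual \<phi>" unfolding \<phi>_def using fc fG' by (intro cdual_sum) auto
  have "real (card G') * (v / 2) = (\<Sum>k\<in>G'. v / 2)" by simp
  also have "\<dots> \<le> (\<Sum>k\<in>G'. Re (c * f (s k) x))" using Gv by (intro sum_mono) (auto simp: G'_def)
  also have "\<dots> = Re (\<phi> x)" unfolding \<phi>_def by simp
  also have "\<dots> \<le> norm (\<phi> x)" by (rule complex_Re_le_cmod)
  also have "\<dots> \<le> dual_norm \<phi> * norm x" by (rule dual_norm_le[OF cphi])
  also have "\<dots> \<le> (\<bar>C\<bar> * real (card G') powr (1 / p) + 1) * norm x"
    using tb unfolding \<phi>_def by (intro mult_right_mono) auto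
  also have "\<dots> \<le> (\<bar>C\<bar> + 1) * real (card G') powr (1 / p) * norm x"
  proof -
    have "1 \<le> real (card G') powr (1 / p)" using G'ne fG' p
      by (intro ge_one_powr_ge_zero) (auto simp: Suc_le_eq card_gt_0_iff)
    then show ?thesis by (intro mult_right_mono) (auto simp: algebra_simps)
  qed
  also have "\<dots> \<le> (\<bar>C\<bar> + 1) * real g powr (1 / p) * norm x"
    using cG'g p by (intro mult_right_mono mult_left_mono powr_mono2) auto
  finally have A: "real (card G') * v \<le> 2 * ((\<bar>C\<bar> + 1) * real g powr (1 / p) * norm x)" by simp
  have "real g * v \<le> 2 * real (card G') * v" using g2 v by (simp add: mult_right_mono)
  with A have "real g * v \<le> 4 * ((\<bar>C\<bar> + 1) * real g powr (1 / p) * norm x)" by linarith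
  then show ?thesis unfolding g_def by (simp add: algebra_simps)
qed

lemma weak_bound:
  assumes F: "finite F" and v: "v > 0" and Fv: "\<And>k. k \<in> F \<Longrightarrow> v \<le> norm (f (s k) x)"
  shows "real (card F) * v \<le> 16 * (\<bar>C\<bar> + 1) * real (card F) powr (1 / p) * norm x"
proof -
  define Q where "Q c = {k\<in>F. v / 2 \<le> Re (c * f (s k) x)}" for c
  have fQ: "finite (Q c)" for c unfolding Q_def using F by simp
  have cQ: "card (Q c) \<le> card F" for c unfolding Q_def using F by (intro card_mono) auto
  have cover: "F \<subseteq> Q 1 \<union> Q (-1) \<union> Q \<i> \<union> Q (-\<i>)"
  proof
    fix k assume k: "k \<in> F"
    have "v \<le> \<bar>Re (f (s k) x)\<bar> + \<bar>Im (f (s k) x)\<bar>" using Fv[OF k] cmod_le[of "f (s k) x"] by linarith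
    then have "v / 2 \<le> Re (f (s k) x) \<or> v / 2 \<le> - Re (f (s k) x) \<or> v / 2 \<le> - Im (f (s k) x) \<or> v / 2 \<le> Im (f (s k) x)" by linarith
    then show "k \<in> Q 1 \<union> Q (-1) \<union> Q \<i> \<union> Q (-\<i>)" unfolding Q_def using k by auto
  qed
  have each: "real (card (Q c)) * v \<le> 4 * (\<bar>C\<bar> + 1) * real (card F) powr (1 / p) * norm x"
    if c: "c \<in> {1, -1, \<i>, -\<i>}" for c
  proof -
    have "real (card (Q c)) * v \<le> 4 * (\<bar>C\<bar> + 1) * real (card (Q c)) powr (1 / p) * norm x"
      by (rule count_quadrant[OF c fQ v]) (auto simp: Q_def)
    also have "\<dots> \<le> 4 * (\<bar>C\<bar> + 1) * real (card F) powr (1 / p) * norm x"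
      using cQ[of c] p by (intro mult_right_mono mult_left_mono powr_mono2) auto
    finally show ?thesis .
  qed
  have "card F \<le> card (Q 1 \<union> Q (-1) \<union> Q \<i> \<union> Q (-\<i>))" using cover fQ by (intro card_mono) auto
  also have "\<dots> \<le> card (Q 1) + card (Q (-1)) + card (Q \<i>) + card (Q (-\<i>))"
    by (meson add_le_mono card_Un_le le_refl order_trans)
  finally have "real (card F) * v \<le> (real (card (Q 1)) + real (card (Q (-1))) + real (card (Q \<i>)) + real (card (Q (-\<i>)))) * v"
    using v by (intro mult_right_mono) (auto simp flip: of_nat_add)
  also have "\<dots> \<le> 4 * (4 * (\<bar>C\<bar> + 1) * real (card F) powr (1 / p) * norm x)"
    using each[of 1] each[of "-1"] each[of \<i>] each[of "-\<i>"] by (simp add: distrib_right)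
  finally show ?thesis by (simp add: algebra_simps)
qed

lemma finite_sum_bound:
  assumes N: "N \<ge> 1"
  shows "finite F \<Longrightarrow> card F = n \<Longrightarrow> (\<Sum>k\<in>F. norm (f (s k) x) ^ N)
     \<le> norm x ^ N * (\<Sum>j\<in>{1..n}. (16 * (\<bar>C\<bar> + 1) * real j powr (1 / p - 1)) ^ N)"
proof (induction n arbitrary: F)
  case 0
  then show ?case by simp
next
  case (Suc n)
  define B where "B = 16 * (\<bar>C\<bar> + 1)"
  have B0: "B > 0" unfolding B_def by simp
  define a where "a k = norm (f (s k) x)" for k
  have Fne: "F \<noteq> {}" using Suc.prems by auto
  define v where "v = Min (a ` F)"
  have "v \<in> a ` F" unfolding v_def using Suc.prems(1) Fne by (intro Min_in) auto
  then obtain k0 where k0: "k0 \<in> F" "a k0 = v" by auto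
  have vle: "v \<le> a k" if "k \<in> F" for k unfolding v_def using Suc.prems(1) that by (intro Min_le) auto
  have cF': "card (F - {k0}) = n" using Suc.prems k0 by simp
  have IH: "(\<Sum>k\<in>F - {k0}. a k ^ N) \<le> norm x ^ N * (\<Sum>j\<in>{1..n}. (B * real j powr (1 / p - 1)) ^ N)"
    using Suc.IH[of "F - {k0}"] Suc.prems(1) cF' unfolding a_def B_def by simp
  have last: "v ^ N \<le> norm x ^ N * (B * real (Suc n) powr (1 / p - 1)) ^ N"
  proof (cases "v = 0")
    case True
    then show ?thesis using N B0 by (simp add: zero_power)
  next
    case False
    then have vp: "v > 0" using k0 unfolding a_def by auto
    define m where "m = real (Suc n)"
    have m0: "m > 0" unfolding m_def by simp
    have "m * v \<le> B * m powr (1 / p) * norm x"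
      using weak_bound[OF Suc.prems(1) vp, of x] vle Suc.prems(2) unfolding m_def B_def a_def by auto
    then have "v \<le> B * (m powr (1 / p) / m) * norm x" using m0 by (simp add: field_simps)
    also have "m powr (1 / p) / m = m powr (1 / p - 1)" using m0 by (simp add: powr_diff)
    finally have "v \<le> norm x * (B * m powr (1 / p - 1))" by (simp add: algebra_simps)
    then have "v ^ N \<le> (norm x * (B * m powr (1 / p - 1))) ^ N" using vp by (intro power_mono) auto
    then show ?thesis unfolding m_def by (simp add: power_mult_distrib)
  qed
  have "(\<Sum>k\<in>F. a k ^ N) = a k0 ^ N + (\<Sum>k\<in>F - {k0}. a k ^ N)"
    using Suc.prems(1) k0(1) by (simp add: sum.remove)
  also have "\<dots> \<le> norm x ^ N * (B * real (Suc n) powr (1 / p - 1)) ^ N + norm x ^ N * (\<Sum>j\<in>{1..n}. (B * real j powr (1 / p - 1)) ^ N)"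
    using last IH k0 by simp
  also have "\<dots> = norm x ^ N * (\<Sum>j\<in>{1..Suc n}. (B * real j powr (1 / p - 1)) ^ N)"
    by (simp add: algebra_simps)
  finally show ?case unfolding a_def B_def .
qed

lemma series_bound:
  assumes N: "N \<ge> 1" and Np: "real N > p / (p - 1)"
  shows "\<exists>D. \<forall>x. summable (\<lambda>k. norm (f (s k) x) ^ N) \<and> (\<Sum>k. norm (f (s k) x) ^ N) \<le> D * norm x ^ N"
proof -
  define B where "B = 16 * (\<bar>C\<bar> + 1)"
  have B0: "B > 0" unfolding B_def by simp
  define w where "w j = (B * real j powr (1 / p - 1)) ^ N" for j :: nat
  have w0: "w j \<ge> 0" for j unfolding w_def using B0 by simp
  have we: "w j = B ^ N * real j powr (real N * (1 / p - 1))" for j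
  proof (cases "j = 0")
    case True then show ?thesis unfolding w_def using N by (simp add: zero_power)
  next
    case False then show ?thesis unfolding w_def by (simp add: power_mult_distrib powr_power)
  qed
  have ex: "real N * (1 / p - 1) < -1"
  proof -
    have "real N * (p - 1) > p" using Np p by (simp add: field_simps)
    then have "real N * (p - 1) / p > 1" using p by (simp add: field_simps)
    moreover have "real N * (1 / p - 1) = - (real N * (p - 1) / p)" using p by (simp add: field_simps)
    ultimately show ?thesis by linarith
  qed
  have sw: "summable w" unfolding we
    by (intro summable_mult) (use summable_real_powr_iff ex in auto)
  show ?thesis
  proof (intro exI allI conjI)
    fix x :: 'a
    have ps: "(\<Sum>k<n. norm (f (s k) x) ^ N) \<le> norm x ^ N * suminf w" for n
    proof -
      have "(\<Sum>k<n. norm (f (s k) x) ^ N) \<le> norm x ^ N * (\<Sum>j\<in>{1..n}. w j)"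
        using finite_sum_bound[OF N, of "{..<n}" n x] unfolding w_def B_def by simp
      also have "\<dots> \<le> norm x ^ N * suminf w"
        using sw w0 by (intro mult_left_mono sum_le_suminf) auto
      finally show ?thesis .
    qed
    show "summable (\<lambda>k. norm (f (s k) x) ^ N)"
      by (rule summableI_nonneg_bounded[OF _ ps]) auto
    then show "(\<Sum>k. norm (f (s k) x) ^ N) \<le> suminf w * norm x ^ N"
      using suminf_le_const ps by (metis mult.commute)
  qed
qed

end

lemma poly_from_biorth:
  fixes y :: "nat \<Rightarrow> 'a::complex_normed_vector"
  assumes p: "p > 1" and Np: "real N > p / (p - 1)" and b: "biorth_sm_cond p y"
  shows "\<exists>P (r'::nat \<Rightarrow> nat). hom_poly N P \<and> strict_mono r' \<and> (\<forall>j t. P (t *\<^sub>R y (r' j)) = complex_of_real (t ^ N))"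
proof -
  obtain r f L where r: "strict_mono r" and fc: "\<And>k. cdual (f k)"
    and bo: "\<And>k j. f k (y (r j)) = (if k = j then 1 else 0)"
    and sm: "spreading_model f L" and up: "upper_p_estimate L p"
    using b unfolding biorth_sm_cond_def by blast
  obtain C where C: "\<And>a. fin_supp a \<Longrightarrow> L a \<le> C * (\<Sum>i\<in>{i. a i \<noteq> 0}. norm (a i) powr p) powr (1 / p)"
    using up unfolding upper_p_estimate_def by blast
  have "\<forall>c m. \<exists>k. \<forall>ks. strict_mono ks \<and> k < ks 0 \<longrightarrow>
        \<bar>dual_norm (\<lambda>x. \<Sum>i<m. c * f (ks i) x) - L (\<lambda>i. if i < m then c else 0)\<bar> < 1"
  proof (intro allI)
    fix c :: complex and m :: nat
    show "\<exists>k. \<forall>ks. strict_mono ks \<and> k < ks 0 \<longrightarrow>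
        \<bar>dual_norm (\<lambda>x. \<Sum>i<m. c * f (ks i) x) - L (\<lambda>i. if i < m then c else 0)\<bar> < 1"
      using sm unfolding spreading_model_def
      by (elim conjE allE[of _ 1] allE[of _ m] allE[of _ "\<lambda>_. c"]) auto
  qed
  then obtain k0 where k0: "\<And>c m ks. strict_mono ks \<Longrightarrow> k0 c m < ks 0 \<Longrightarrow>
        \<bar>dual_norm (\<lambda>x. \<Sum>i<m. c * f (ks i) x) - L (\<lambda>i. if i < m then c else 0)\<bar> < 1"
    by metis
  have k0': "\<And>c m ks. c \<in> {1, -1, \<i>, -\<i>} \<Longrightarrow> strict_mono ks \<Longrightarrow> k0 c m < ks 0 \<Longrightarrow>
        \<bar>dual_norm (\<lambda>x. \<Sum>i<m. c * f (ks i) x) - L (\<lambda>i. if i < m then c else 0)\<bar> < 1"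
    using k0 by blast
  define U :: "complex set" where "U = {1, -1, \<i>, -\<i>}"
  define s where "s j = (\<Sum>m\<le>2 * j + 1. \<Sum>c\<in>U. k0 c m) + j + 1" for j
  have sm1: "strict_mono s"
  proof (rule strict_monoI_Suc)
    fix j
    have "(\<Sum>m\<le>2 * j + 1. \<Sum>c\<in>U. k0 c m) \<le> (\<Sum>m\<le>2 * Suc j + 1. \<Sum>c\<in>U. k0 c m)"
      by (intro sum_mono2) auto
    then show "s j < s (Suc j)" unfolding s_def by simp
  qed
  have sm2: "k0 c m < s j" if "c \<in> {1, -1, \<i>, -\<i>}" "m \<le> 2 * j + 1" for c m j
  proof -
    have "k0 c m \<le> (\<Sum>c\<in>U. k0 c m)" using that(1) unfolding U_def by (intro member_le_sum) auto
    also have "\<dots> \<le> (\<Sum>m\<le>2 * j + 1. \<Sum>c\<in>U. k0 c m)"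
      using that(2) by (intro member_le_sum[where f="\<lambda>m. \<Sum>c\<in>U. k0 c m"]) auto
    finally show ?thesis unfolding s_def by simp
  qed
  have N: "N \<ge> 1"
  proof -
    have "p / (p - 1) > 0" using p by simp
    then show ?thesis using Np by linarith
  qed
  obtain D where D: "\<And>x. summable (\<lambda>k. norm (f (s k) x) ^ N)" "\<And>x. (\<Sum>k. norm (f (s k) x) ^ N) \<le> D * norm x ^ N"
  proof -
    have "\<exists>D. \<forall>x. summable (\<lambda>k. norm (f (s k) x) ^ N) \<and> (\<Sum>k. norm (f (s k) x) ^ N) \<le> D * norm x ^ N"
      by (rule series_bound[where f=f and L=L and p=p and C=C and s=s])
        (fact fc p C k0' sm1 sm2 N Np)+
    then show ?thesis using that by blast
  qed
  have ml: "multilinear_form N (\<lambda>v. \<Sum>k. \<Prod>i<N. f (s k) (v i))"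
    by (rule multilinear_series[OF fc D N])
  define P where "P x = (\<Sum>k. f (s k) x ^ N)" for x
  have hp: "hom_poly N P" unfolding hom_poly_def P_def using ml
    by (intro exI[of _ "\<lambda>v. \<Sum>k. \<Prod>i<N. f (s k) (v i)"]) auto
  have ev: "P (t *\<^sub>R y (r (s j))) = complex_of_real (t ^ N)" for j t
  proof -
    have "f (s k) (t *\<^sub>R y (r (s j))) ^ N = (if k = j then complex_of_real (t ^ N) else 0)" for k
      using cdual_scaleR[OF fc] bo strict_mono_eq[OF sm1] N by (simp add: zero_power)
    then have "P (t *\<^sub>R y (r (s j))) = (\<Sum>k. if k = j then complex_of_real (t ^ N) else 0)"
      unfolding P_def by simp
    also have "\<dots> = complex_of_real (t ^ N)"
      using sums_single[of j "\<lambda>_. complex_of_real (t ^ N)"] sums_unique by (metis (no_types))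
    finally show ?thesis .
  qed
  have "strict_mono (r \<circ> s)" using r sm1 by (simp add: strict_mono_def)
  moreover have "\<forall>j t. P (t *\<^sub>R y ((r \<circ> s) j)) = complex_of_real (t ^ N)" using ev by simp
  ultimately have "hom_poly N P \<and> strict_mono (r \<circ> s) \<and> (\<forall>j t. P (t *\<^sub>R y ((r \<circ> s) j)) = complex_of_real (t ^ N))"
    using hp by blast
  then show ?thesis by blast
qed

lemma schur_core:
  fixes x :: "nat \<Rightarrow> 'a::complex_normed_vector"
  assumes N1: "N \<ge> 1" and hN: "\<forall>P. hom_poly N P \<longrightarrow> (\<lambda>n. P (x n)) \<longlonglongrightarrow> 0"
    and hyp: "\<And>y::nat \<Rightarrow> 'a. normalized y \<Longrightarrow> weakly_null y \<Longrightarrow> \<exists>p M. p > 1 \<and> real M > p / (p - 1) \<and>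
       biorth_sm_cond p y \<and> (\<forall>P. hom_poly M P \<longrightarrow> (\<lambda>n. P (x n)) \<longlonglongrightarrow> 0)"
  shows "(\<lambda>n. norm (x n)) \<longlonglongrightarrow> 0"
proof (rule ccontr)
  assume nt: "\<not> (\<lambda>n. norm (x n)) \<longlonglongrightarrow> 0"
  obtain \<delta> where d0: "\<delta> > 0" and dinf: "\<forall>m. \<exists>n\<ge>m. \<delta> \<le> norm (x n)"
  proof -
    have "\<not> (\<forall>r>0. \<exists>no. \<forall>n\<ge>no. norm (norm (x n) - 0) < r)" using nt unfolding LIMSEQ_iff .
    then have "\<not> (\<forall>r>0. \<exists>no. \<forall>n\<ge>no. norm (x n) < r)" by simp
    then obtain r where r0: "r > 0" and rr: "\<forall>no. \<exists>n\<ge>no. \<not> norm (x n) < r" by blast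
    have "\<forall>no. \<exists>n\<ge>no. r \<le> norm (x n)" using rr by (simp add: not_less)
    then show ?thesis using that r0 by blast
  qed
  define S where "S = {n. \<delta> \<le> norm (x n)}"
  have Sinf: "infinite S" unfolding S_def infinite_nat_iff_unbounded_le using dinf by auto
  define t where "t = enumerate S"
  have t: "strict_mono t" unfolding t_def by (rule strict_mono_enumerate[OF Sinf])
  have tS: "\<delta> \<le> norm (x (t n))" for n
    using enumerate_in_set[OF Sinf, of n] unfolding t_def S_def by simp
  have tpos: "norm (x (t n)) > 0" for n using tS[of n] d0 by linarith
  define y where "y n = (1 / norm (x (t n))) *\<^sub>R x (t n)" for n
  have ny: "normalized y" unfolding normalized_def y_def using tpos by simp
  have wy: "weakly_null y" unfolding weakly_null_def
  proof (intro allI impI)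
    fix f :: "'a \<Rightarrow> complex" assume f: "cdual f"
    have "(\<lambda>n. f (x n)) \<longlonglongrightarrow> 0" by (rule weakly_null_from_poly[OF N1 hN f])
    then have "((\<lambda>n. f (x n)) \<circ> t) \<longlonglongrightarrow> 0" using t by (rule LIMSEQ_subseq_LIMSEQ)
    then have l: "(\<lambda>n. norm (f (x (t n))) / \<delta>) \<longlonglongrightarrow> 0"
      using tendsto_divide_zero[OF tendsto_norm_zero] by (simp add: o_def)
    show "(\<lambda>n. f (y n)) \<longlonglongrightarrow> 0"
    proof (rule Lim_null_comparison[OF _ l], intro always_eventually allI)
      fix n
      have "f (y n) = f (x (t n)) / complex_of_real (norm (x (t n)))"
        unfolding y_def using cdual_scaleR[OF f] by simp
      then have "norm (f (y n)) = norm (f (x (t n))) / norm (x (t n))" by (simp add: norm_divide)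
      also have "\<dots> \<le> norm (f (x (t n))) / \<delta>" using tS[of n] d0 tpos[of n] by (intro divide_left_mono) (simp_all add: mult_pos_pos)
      finally show "norm (f (y n)) \<le> norm (f (x (t n))) / \<delta>" .
    qed
  qed
  obtain p M where p: "p > 1" and Mp: "real M > p / (p - 1)" and b: "biorth_sm_cond p y"
    and hM: "\<forall>P. hom_poly M P \<longrightarrow> (\<lambda>n. P (x n)) \<longlonglongrightarrow> 0"
    using hyp[OF ny wy] by blast
  obtain P and r' :: "nat \<Rightarrow> nat" where hP: "hom_poly M P" and r': "strict_mono r'"
    and ev: "\<And>j t. P (t *\<^sub>R y (r' j)) = complex_of_real (t ^ M)"
    using poly_from_biorth[OF p Mp b] by blast
  have "(\<lambda>n. P (x n)) \<longlonglongrightarrow> 0" using hM hP by blast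
  then have "((\<lambda>n. P (x n)) \<circ> (t \<circ> r')) \<longlonglongrightarrow> 0" using t r'
    by (intro LIMSEQ_subseq_LIMSEQ) (auto simp: strict_mono_def)
  then have "(\<lambda>j. norm (P (x (t (r' j))))) \<longlonglongrightarrow> 0" by (simp add: o_def tendsto_norm_zero)
  moreover have "\<delta> ^ M > 0" using d0 by simp
  ultimately have "eventually (\<lambda>j. norm (P (x (t (r' j)))) < \<delta> ^ M) sequentially"
    by (rule order_tendstoD(2))
  then obtain j where j: "norm (P (x (t (r' j)))) < \<delta> ^ M" by (auto simp: eventually_sequentially)
  have "x (t (r' j)) = norm (x (t (r' j))) *\<^sub>R y (r' j)" unfolding y_def using tpos by simp
  then have "P (x (t (r' j))) = P (norm (x (t (r' j))) *\<^sub>R y (r' j))" by (rule arg_cong)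
  also have "\<dots> = complex_of_real (norm (x (t (r' j))) ^ M)" by (rule ev)
  finally have "P (x (t (r' j))) = complex_of_real (norm (x (t (r' j))) ^ M)" .
  then have "norm (P (x (t (r' j)))) = norm (x (t (r' j))) ^ M" by (simp add: norm_power)
  moreover have "\<delta> ^ M \<le> norm (x (t (r' j))) ^ M" using tS d0 by (intro power_mono) auto
  ultimately show False using j by linarith
qed

theorem theorem3p3:
  shows "((\<forall>y::nat \<Rightarrow> 'a::{complex_normed_vector, banach}.
            normalized y \<and> weakly_null y \<longrightarrow> (\<exists>p>1. biorth_sm_cond p y))
          \<longrightarrow> P_Schur TYPE('a))
       \<and> (\<forall>(p::real) (N::nat). p > 1 \<and> real N > p / (p - 1) \<and>
            (\<forall>y::nat \<Rightarrow> 'a. normalized y \<and> weakly_null y \<longrightarrow> biorth_sm_cond p y)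
            \<longrightarrow> P_N_Schur TYPE('a) N)"
proof (intro conjI impI allI)
  assume H: "\<forall>y::nat \<Rightarrow> 'a. normalized y \<and> weakly_null y \<longrightarrow> (\<exists>p>1. biorth_sm_cond p y)"
  show "P_Schur TYPE('a)" unfolding P_Schur_def
  proof (intro allI impI)
    fix x :: "nat \<Rightarrow> 'a"
    assume hx: "\<forall>M\<ge>1. \<forall>P. hom_poly M P \<longrightarrow> (\<lambda>n. P (x n)) \<longlonglongrightarrow> 0"
    show "(\<lambda>n. norm (x n)) \<longlonglongrightarrow> 0"
    proof (rule schur_core[of 1])
      show "\<forall>P. hom_poly 1 P \<longrightarrow> (\<lambda>n. P (x n)) \<longlonglongrightarrow> 0" using hx by auto
    next
      fix y :: "nat \<Rightarrow> 'a" assume "normalized y" "weakly_null y"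
      then obtain p where p: "p > 1" "biorth_sm_cond p y" using H by blast
      define M where "M = nat \<lceil>p / (p - 1)\<rceil> + 1"
      have M: "real M > p / (p - 1)" unfolding M_def by linarith
      have M1: "M \<ge> 1" unfolding M_def by simp
      show "\<exists>p M. p > 1 \<and> real M > p / (p - 1) \<and> biorth_sm_cond p y \<and> (\<forall>P. hom_poly M P \<longrightarrow> (\<lambda>n. P (x n)) \<longlonglongrightarrow> 0)"
        using p M M1 hx by blast
    qed simp
  qed
next
  fix p :: real and N :: nat
  assume H: "p > 1 \<and> real N > p / (p - 1) \<and> (\<forall>y::nat \<Rightarrow> 'a. normalized y \<and> weakly_null y \<longrightarrow> biorth_sm_cond p y)"
  have N1: "N \<ge> 1"
  proof -
    have "p / (p - 1) > 0" using H by simp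
    then show ?thesis using H by linarith
  qed
  show "P_N_Schur TYPE('a) N" unfolding P_N_Schur_def
  proof (intro allI impI)
    fix x :: "nat \<Rightarrow> 'a"
    assume hx: "\<forall>P. hom_poly N P \<longrightarrow> (\<lambda>n. P (x n)) \<longlonglongrightarrow> 0"
    show "(\<lambda>n. norm (x n)) \<longlonglongrightarrow> 0"
      by (rule schur_core[OF N1 hx]) (use H hx in blast)
  qed
qed

end
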